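(* Let $\mathcal{G}=(V,\mathit{Act},\mathcal{R})$ be a normed BPA system. For all $\alpha,\gamma\in V^*$: $\alpha\gamma\sim\gamma$ if and only if $\alpha\in(R_\gamma)^*$, where $R_\gamma=\{X\in V\mid X\gamma\sim\gamma\}$.
   Context: A BPA system $\mathcal{G}=(V,\mathit{Act},\mathcal{R})$: finite variables $V$, finite actions $\mathit{Act}$ (possibly containing the silent action $\tau$), rules $A\xrightarrow{a}\alpha$ ($A\in V,\alpha\in V^*$). LTS $\mathcal{L}_\mathcal{G}$: states $V^*$, transitions $A\beta\xrightarrow{a}\alpha\beta$ for rules $A\xrightarrow{a}\alpha$, $\beta\in V^*$. $\mathcal{G}$ is normed if every variable $A$ satisfies $A\xrightarrow{w}\varepsilon$ for some $w\in\mathit{Act}^*$. $\sim$ denotes branching bisimilarity in $\mathcal{L}_\mathcal{G}$ (largest relation $\mathcal{B}$ such that for $(s,t)\in\mathcal{B}$ each move $s\xrightarrow{a}s'$ is matched by $a=\tau$ with $(s',t)\in\mathcal{B}$, or by a path $t=t_0\xrightarrow{\tau}\cdots\xrightarrow{\tau}t_k\xrightarrow{a}t'$ with $(s',t')\in\mathcal{B}$, $(s,t_i)\in\mathcal{B}$ for $i\in[1,k]$; and symmetrically). *)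

theory Defs
  imports Main
begin

text \<open>A BPA system with variables of finite type 'v, actions of finite type 'a
  (one of which, tau, is the silent action) and a set of rules
  (A, a, alpha) standing for A --a--> alpha.\<close>

definition step :: "('v \<times> 'a \<times> 'v list) set \<Rightarrow> 'v list \<Rightarrow> 'a \<Rightarrow> 'v list \<Rightarrow> bool" where
  "step R s a s' \<longleftrightarrow> (\<exists>A alpha beta. (A, a, alpha) \<in> R \<and> s = A # beta \<and> s' = alpha @ beta)"

inductive steps :: "('v \<times> 'a \<times> 'v list) set \<Rightarrow> 'v list \<Rightarrow> 'a list \<Rightarrow> 'v list \<Rightarrow> bool"
  for R where
  steps_nil: "steps R s [] s"
| steps_cons: "step R s a t \<Longrightarrow> steps R t w u \<Longrightarrow> steps R s (a # w) u"

definition normed :: "('v \<times> 'a \<times> 'v list) set \<Rightarrow> bool" where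
  "normed R \<longleftrightarrow> (\<forall>A. \<exists>w. steps R [A] w [])"

definition branching_transfer ::
  "('v \<times> 'a \<times> 'v list) set \<Rightarrow> 'a \<Rightarrow> ('v list \<Rightarrow> 'v list \<Rightarrow> bool) \<Rightarrow> 'v list \<Rightarrow> 'v list \<Rightarrow> bool" where
  "branching_transfer R tau B s t \<longleftrightarrow>
     (\<forall>a s'. step R s a s' \<longrightarrow>
        (a = tau \<and> B s' t) \<or>
        (\<exists>k ts t'. length ts = Suc k \<and> ts ! 0 = t \<and>
            (\<forall>i<k. step R (ts ! i) tau (ts ! Suc i)) \<and>
            step R (ts ! k) a t' \<and> B s' t' \<and>
            (\<forall>i\<in>{1..k}. B s (ts ! i))))"

definition branching_bisimulation ::
  "('v \<times> 'a \<times> 'v list) set \<Rightarrow> 'a \<Rightarrow> ('v list \<Rightarrow> 'v list \<Rightarrow> bool) \<Rightarrow> bool" where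
  "branching_bisimulation R tau B \<longleftrightarrow>
     (\<forall>s t. B s t \<longrightarrow> branching_transfer R tau B s t \<and>
                       branching_transfer R tau (\<lambda>x y. B y x) t s)"

definition bbisim :: "('v \<times> 'a \<times> 'v list) set \<Rightarrow> 'a \<Rightarrow> 'v list \<Rightarrow> 'v list \<Rightarrow> bool" where
  "bbisim R tau s t \<longleftrightarrow> (\<exists>B. branching_bisimulation R tau B \<and> B s t)"

definition R_gamma :: "('v \<times> 'a \<times> 'v list) set \<Rightarrow> 'a \<Rightarrow> 'v list \<Rightarrow> 'v set" where
  "R_gamma R tau gamma = {X. bbisim R tau (X # gamma) gamma}"

end

theory Submission
  imports Defs
begin

context
  fixes R :: "('v \<times> 'a \<times> 'v list) set" and tau :: 'a
begin

inductive tauseq :: "('v list \<Rightarrow> bool) \<Rightarrow> 'v list \<Rightarrow> 'v list \<Rightarrow> bool" for P where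
  ts_refl: "tauseq P t t"
| ts_step: "step R t tau t2 \<Longrightarrow> P t2 \<Longrightarrow> tauseq P t2 u \<Longrightarrow> tauseq P t u"

lemma list_to_tauseq:
  "length ts = Suc k \<Longrightarrow> (\<forall>i<k. step R (ts ! i) tau (ts ! Suc i)) \<Longrightarrow>
   (\<forall>i\<in>{1..k}. P (ts ! i)) \<Longrightarrow> tauseq P (ts ! 0) (ts ! k)"
proof (induction k arbitrary: ts)
  case 0
  then show ?case by (simp add: ts_refl)
next
  case (Suc k)
  let ?ts = "tl ts"
  have l: "length ?ts = Suc k" using Suc.prems by simp
  have nth: "\<And>i. ?ts ! i = ts ! Suc i" using Suc.prems by (cases ts) auto
  have "tauseq P (?ts ! 0) (?ts ! k)"
    apply (rule Suc.IH[OF l])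
    using Suc.prems(2,3) by (auto simp: nth)
  moreover have "step R (ts ! 0) tau (ts ! 1)" using Suc.prems(2) by auto
  moreover have "P (ts ! 1)" using Suc.prems(3) by auto
  ultimately show ?case by (auto simp: nth intro: ts_step)
qed

lemma tauseq_to_list:
  "tauseq P t u \<Longrightarrow> \<exists>k ts. length ts = Suc k \<and> ts ! 0 = t \<and> (\<forall>i<k. step R (ts ! i) tau (ts ! Suc i))
     \<and> ts ! k = u \<and> (\<forall>i\<in>{1..k}. P (ts ! i))"
proof (induction rule: tauseq.induct)
  case (ts_refl t)
  show ?case by (rule exI[of _ 0], rule exI[of _ "[t]"]) auto
next
  case (ts_step t t2 u)
  then obtain k ts where h: "length ts = Suc k" "ts ! 0 = t2" "\<forall>i<k. step R (ts ! i) tau (ts ! Suc i)"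
     "ts ! k = u" "\<forall>i\<in>{1..k}. P (ts ! i)" by blast
  show ?case
  proof (rule exI[of _ "Suc k"], rule exI[of _ "t # ts"], intro conjI)
    show "\<forall>i<Suc k. step R ((t # ts) ! i) tau ((t # ts) ! Suc i)"
    proof (intro allI impI)
      fix i assume "i < Suc k" then show "step R ((t # ts) ! i) tau ((t # ts) ! Suc i)"
        using h ts_step.hyps by (cases i) auto
    qed
    show "\<forall>i\<in>{1..Suc k}. P ((t # ts) ! i)"
    proof
      fix i assume "i \<in> {1..Suc k}" then show "P ((t # ts) ! i)"
        using h ts_step.hyps by (cases i; cases "i - 1") auto
    qed
  qed (use h in auto)
qed

definition btr where
  "btr B s t \<longleftrightarrow> (\<forall>a s'. step R s a s' \<longrightarrow> (a = tau \<and> B s' t) \<or>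
     (\<exists>t1 t'. tauseq (B s) t t1 \<and> step R t1 a t' \<and> B s' t'))"

lemma btr_eq: "branching_transfer R tau B s t = btr B s t"
  unfolding branching_transfer_def btr_def
proof (intro iffI allI impI)
  fix a s'
  assume H: "\<forall>a s'. step R s a s' \<longrightarrow> a = tau \<and> B s' t \<or> (\<exists>k ts t'. length ts = Suc k \<and> ts ! 0 = t \<and> (\<forall>i<k. step R (ts ! i) tau (ts ! Suc i)) \<and> step R (ts ! k) a t' \<and> B s' t' \<and> (\<forall>i\<in>{1..k}. B s (ts ! i)))"
    and st: "step R s a s'"
  show "a = tau \<and> B s' t \<or> (\<exists>t1 t'. tauseq (B s) t t1 \<and> step R t1 a t' \<and> B s' t')"
  proof (cases "a = tau \<and> B s' t")
    case False
    then obtain k ts t' where h: "length ts = Suc k" "ts ! 0 = t" "\<forall>i<k. step R (ts ! i) tau (ts ! Suc i)"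
      "step R (ts ! k) a t'" "B s' t'" "\<forall>i\<in>{1..k}. B s (ts ! i)" using H[rule_format, OF st] by blast
    have "tauseq (B s) (ts ! 0) (ts ! k)" by (rule list_to_tauseq) (use h in auto)
    then show ?thesis using h by (intro disjI2 exI[of _ "ts ! k"] exI[of _ t']) auto
  qed simp
next
  fix a s'
  assume H: "\<forall>a s'. step R s a s' \<longrightarrow> a = tau \<and> B s' t \<or> (\<exists>t1 t'. tauseq (B s) t t1 \<and> step R t1 a t' \<and> B s' t')"
    and st: "step R s a s'"
  show "a = tau \<and> B s' t \<or> (\<exists>k ts t'. length ts = Suc k \<and> ts ! 0 = t \<and> (\<forall>i<k. step R (ts ! i) tau (ts ! Suc i)) \<and> step R (ts ! k) a t' \<and> B s' t' \<and> (\<forall>i\<in>{1..k}. B s (ts ! i)))"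
  proof (cases "a = tau \<and> B s' t")
    case False
    then obtain t1 t' where h: "tauseq (B s) t t1" "step R t1 a t'" "B s' t'" using H[rule_format, OF st] by blast
    from tauseq_to_list[OF h(1)] obtain k ts where g: "length ts = Suc k" "ts ! 0 = t" "\<forall>i<k. step R (ts ! i) tau (ts ! Suc i)"
     "ts ! k = t1" "\<forall>i\<in>{1..k}. B s (ts ! i)" by blast
    show ?thesis using g h by (intro disjI2 exI[of _ k] exI[of _ ts] exI[of _ t']) auto
  qed simp
qed

lemma bb_def2: "branching_bisimulation R tau B \<longleftrightarrow> (\<forall>s t. B s t \<longrightarrow> btr B s t \<and> btr (\<lambda>x y. B y x) t s)"
  unfolding branching_bisimulation_def btr_eq ..

lemma tauseq_mono: "tauseq P t u \<Longrightarrow> (\<And>x. P x \<Longrightarrow> Q x) \<Longrightarrow> tauseq Q t u"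
  by (induction rule: tauseq.induct) (auto intro: tauseq.intros)

lemma btr_mono:
  assumes b: "btr B s t" and m: "\<And>x y. B x y \<Longrightarrow> B' x y"
  shows "btr B' s t"
  unfolding btr_def
proof (intro allI impI)
  fix a s' assume st: "step R s a s'"
  from b st have "a = tau \<and> B s' t \<or> (\<exists>t1 t'. tauseq (B s) t t1 \<and> step R t1 a t' \<and> B s' t')"
    unfolding btr_def by blast
  then show "a = tau \<and> B' s' t \<or> (\<exists>t1 t'. tauseq (B' s) t t1 \<and> step R t1 a t' \<and> B' s' t')"
  proof
    assume "\<exists>t1 t'. tauseq (B s) t t1 \<and> step R t1 a t' \<and> B s' t'"
    then obtain t1 t' where h: "tauseq (B s) t t1" "step R t1 a t'" "B s' t'" by blast
    have "tauseq (B' s) t t1" using h(1) by (rule tauseq_mono) (rule m)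
    then show ?thesis using h m by blast
  qed (use m in blast)
qed

lemma bbisim_btr: "bbisim R tau s t \<Longrightarrow> btr (bbisim R tau) s t \<and> btr (\<lambda>x y. bbisim R tau y x) t s"
proof -
  assume "bbisim R tau s t"
  then obtain B where B: "branching_bisimulation R tau B" "B s t" unfolding bbisim_def by blast
  have sub: "\<And>x y. B x y \<Longrightarrow> bbisim R tau x y" unfolding bbisim_def using B(1) by (intro exI[of _ B] conjI)
  have "btr B s t" "btr (\<lambda>x y. B y x) t s" using B unfolding bb_def2 by blast+
  moreover have "\<And>x y. B y x \<Longrightarrow> bbisim R tau y x" by (rule sub)
  ultimately show ?thesis using btr_mono[of B s t "bbisim R tau"] btr_mono[of "\<lambda>x y. B y x" t s "\<lambda>x y. bbisim R tau y x"] sub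
    by simp
qed

lemma bbisim_coind: "(\<And>s t. B s t \<Longrightarrow> btr B s t \<and> btr (\<lambda>x y. B y x) t s) \<Longrightarrow> B s t \<Longrightarrow> bbisim R tau s t"
  unfolding bbisim_def bb_def2 by (intro exI[of _ B] conjI) auto

lemma bbisim_sym: "bbisim R tau s t \<Longrightarrow> bbisim R tau t s"
proof -
  assume "bbisim R tau s t"
  then obtain B where B: "branching_bisimulation R tau B" "B s t" unfolding bbisim_def by blast
  have "branching_bisimulation R tau (\<lambda>x y. B y x)" using B(1) unfolding branching_bisimulation_def by auto
  then show ?thesis using B(2) unfolding bbisim_def by (intro exI[of _ "\<lambda>x y. B y x"] conjI)
qed


lemma step_Nil[simp]: "\<not> step R [] a s'" by (simp add: step_def)
lemma step_Cons: "step R (A#b) a s' \<longleftrightarrow> (\<exists>al. (A,a,al) \<in> R \<and> s' = al@b)" by (auto simp: step_def)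

lemma tauseq_trans: "tauseq P t u \<Longrightarrow> tauseq P u v \<Longrightarrow> tauseq P t v"
  by (induction rule: tauseq.induct) (auto intro: tauseq.intros)

lemma tauseq_last: "tauseq P t u \<Longrightarrow> u = t \<or> P u"
  by (induction rule: tauseq.induct) auto

lemma tauseq_snoc: "tauseq P t u \<Longrightarrow> step R u tau v \<Longrightarrow> P v \<Longrightarrow> tauseq P t v"
  by (erule tauseq_trans) (auto intro: tauseq.intros)

lemma tauseq_rev: "tauseq P t u \<Longrightarrow> u = t \<or> (\<exists>u0. tauseq P t u0 \<and> step R u0 tau u \<and> P u)"
proof (induction rule: tauseq.induct)
  case (ts_step t t2 u)
  then show ?case by (metis tauseq.intros)
qed simp

lemma bbisim_refl: "bbisim R tau s s"
proof (rule bbisim_coind[of "(=)"])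
  fix s t :: "'v list" assume "s = t"
  then show "btr (=) s t \<and> btr (\<lambda>x y. y = x) t s"
    unfolding btr_def by (auto intro: ts_refl)
qed simp

lemma path_transfer:
  "tauseq (bbisim R tau s) u u1 \<Longrightarrow> bbisim R tau s u \<Longrightarrow> bbisim R tau u t \<Longrightarrow>
   \<exists>t1. tauseq ((bbisim R tau OO bbisim R tau) s) t t1 \<and> bbisim R tau u1 t1"
proof (induction arbitrary: t rule: tauseq.induct)
  case (ts_refl u)
  then show ?case by (auto intro: tauseq.intros)
next
  case (ts_step u u2 u1)
  have "btr (bbisim R tau) u t" using bbisim_btr[OF ts_step.prems(2)] by blast
  then have "(bbisim R tau u2 t) \<or> (\<exists>t3 t4. tauseq (bbisim R tau u) t t3 \<and> step R t3 tau t4 \<and> bbisim R tau u2 t4)"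
    using ts_step.hyps(1) unfolding btr_def by blast
  then show ?case
  proof
    assume "bbisim R tau u2 t"
    then show ?case using ts_step.IH ts_step.hyps by blast
  next
    assume "\<exists>t3 t4. tauseq (bbisim R tau u) t t3 \<and> step R t3 tau t4 \<and> bbisim R tau u2 t4"
    then obtain t3 t4 where h: "tauseq (bbisim R tau u) t t3" "step R t3 tau t4" "bbisim R tau u2 t4" by blast
    have "tauseq ((bbisim R tau OO bbisim R tau) s) t t3"
      by (rule tauseq_mono[OF h(1)]) (use ts_step.prems(1) in blast)
    then have a: "tauseq ((bbisim R tau OO bbisim R tau) s) t t4"
      by (rule tauseq_snoc[OF _ h(2)]) (use h(3) ts_step.hyps(2) in blast)
    obtain t1 where "tauseq ((bbisim R tau OO bbisim R tau) s) t4 t1" "bbisim R tau u1 t1"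
      using ts_step.IH[OF ts_step.hyps(2) h(3)] by blast
    then show ?case using tauseq_trans[OF a] by blast
  qed
qed

lemma comp_btr: "bbisim R tau s u \<Longrightarrow> bbisim R tau u t \<Longrightarrow> btr (bbisim R tau OO bbisim R tau) s t"
  unfolding btr_def
proof (intro allI impI)
  fix a s' assume su: "bbisim R tau s u" and ut: "bbisim R tau u t" and st: "step R s a s'"
  have "btr (bbisim R tau) s u" using bbisim_btr[OF su] by blast
  then have "(a = tau \<and> bbisim R tau s' u) \<or> (\<exists>u1 u'. tauseq (bbisim R tau s) u u1 \<and> step R u1 a u' \<and> bbisim R tau s' u')"
    using st unfolding btr_def by blast
  then show "a = tau \<and> (bbisim R tau OO bbisim R tau) s' t \<or>
        (\<exists>t1 t'. tauseq ((bbisim R tau OO bbisim R tau) s) t t1 \<and> step R t1 a t' \<and> (bbisim R tau OO bbisim R tau) s' t')"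
  proof
    assume "a = tau \<and> bbisim R tau s' u" then show ?thesis using ut by blast
  next
    assume "\<exists>u1 u'. tauseq (bbisim R tau s) u u1 \<and> step R u1 a u' \<and> bbisim R tau s' u'"
    then obtain u1 u' where h: "tauseq (bbisim R tau s) u u1" "step R u1 a u'" "bbisim R tau s' u'" by blast
    obtain t1 where t1: "tauseq ((bbisim R tau OO bbisim R tau) s) t t1" "bbisim R tau u1 t1"
      using path_transfer[OF h(1) su ut] by blast
    have su1: "bbisim R tau s u1" using tauseq_last[OF h(1)] su by blast
    have "btr (bbisim R tau) u1 t1" using bbisim_btr[OF t1(2)] by blast
    then have "(a = tau \<and> bbisim R tau u' t1) \<or> (\<exists>t5 t'. tauseq (bbisim R tau u1) t1 t5 \<and> step R t5 a t' \<and> bbisim R tau u' t')"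
      using h(2) unfolding btr_def by blast
    then show ?thesis
    proof
      assume A: "a = tau \<and> bbisim R tau u' t1"
      then have c: "(bbisim R tau OO bbisim R tau) s' t1" using h(3) by blast
      from tauseq_rev[OF t1(1)] show ?thesis
      proof
        assume "t1 = t" then show ?thesis using A c by blast
      next
        assume "\<exists>u0. tauseq ((bbisim R tau OO bbisim R tau) s) t u0 \<and> step R u0 tau t1 \<and> (bbisim R tau OO bbisim R tau) s t1"
        then show ?thesis using A c by blast
      qed
    next
      assume "\<exists>t5 t'. tauseq (bbisim R tau u1) t1 t5 \<and> step R t5 a t' \<and> bbisim R tau u' t'"
      then obtain t5 t' where g: "tauseq (bbisim R tau u1) t1 t5" "step R t5 a t'" "bbisim R tau u' t'" by blast
      have "tauseq ((bbisim R tau OO bbisim R tau) s) t1 t5" by (rule tauseq_mono[OF g(1)]) (use su1 in blast)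
      then have "tauseq ((bbisim R tau OO bbisim R tau) s) t t5" by (rule tauseq_trans[OF t1(1)])
      then show ?thesis using g h(3) by blast
    qed
  qed
qed

lemma bbisim_trans: "bbisim R tau s u \<Longrightarrow> bbisim R tau u t \<Longrightarrow> bbisim R tau s t"
proof -
  assume a: "bbisim R tau s u" "bbisim R tau u t"
  have fl: "(\<lambda>x y. (bbisim R tau OO bbisim R tau) y x) = bbisim R tau OO bbisim R tau"
    by (auto intro!: ext dest: bbisim_sym)
  show ?thesis
  proof (rule bbisim_coind[of "bbisim R tau OO bbisim R tau"])
    fix x y assume "(bbisim R tau OO bbisim R tau) x y"
    then obtain z where z: "bbisim R tau x z" "bbisim R tau z y" by blast
    show "btr (bbisim R tau OO bbisim R tau) x y \<and> btr (\<lambda>x y. (bbisim R tau OO bbisim R tau) y x) y x"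
      unfolding fl using comp_btr z bbisim_sym by blast
  qed (use a in blast)
qed


definition ctx where "ctx x y \<longleftrightarrow> (\<exists>b d d'. x = b@d \<and> y = b@d' \<and> bbisim R tau d d')"

lemma ctx_sym: "(\<lambda>x y. ctx y x) = ctx"
  unfolding ctx_def by (auto intro!: ext dest: bbisim_sym)

lemma ctx_btr: "ctx x y \<Longrightarrow> btr ctx x y"
proof -
  assume "ctx x y"
  then obtain b d d' where h: "x = b@d" "y = b@d'" "bbisim R tau d d'" unfolding ctx_def by blast
  show ?thesis
  proof (cases b)
    case Nil
    have "btr (bbisim R tau) d d'" using bbisim_btr[OF h(3)] by blast
    moreover have "\<And>p q. bbisim R tau p q \<Longrightarrow> ctx p q"
    proof -
      fix p q assume "bbisim R tau p q"
      then show "ctx p q" unfolding ctx_def by (intro exI[of _ "[]"] exI[of _ p] exI[of _ q]) auto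
    qed
    ultimately show ?thesis using h Nil btr_mono by auto
  next
    case (Cons A b')
    show ?thesis unfolding btr_def
    proof (intro allI impI disjI2)
      fix a s' assume "step R x a s'"
      then obtain al where al: "(A,a,al) \<in> R" "s' = al@b'@d" using h Cons by (auto simp: step_Cons)
      have "step R y a (al@b'@d')" using al h Cons by (auto simp: step_Cons)
      moreover have "ctx s' (al@b'@d')" unfolding ctx_def using al h
        by (intro exI[of _ "al@b'"] exI[of _ d] exI[of _ d']) auto
      ultimately show "\<exists>t1 t'. tauseq (ctx x) y t1 \<and> step R t1 a t' \<and> ctx s' t'"
        by (intro exI[of _ y] exI[of _ "al@b'@d'"]) (auto intro: ts_refl)
    qed
  qed
qed

lemma bbisim_prefix: "bbisim R tau d d' \<Longrightarrow> bbisim R tau (b@d) (b@d')"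
proof (rule bbisim_coind[of ctx])
  fix s t assume "ctx s t"
  then show "btr ctx s t \<and> btr (\<lambda>x y. ctx y x) t s"
    unfolding ctx_sym using ctx_btr ctx_sym by metis
qed (auto simp: ctx_def)

lemma step_app: "step R s a t \<Longrightarrow> step R (s@b) a (t@b)"
  unfolding step_def by fastforce

lemma steps_append: "steps R s w u \<Longrightarrow> steps R (s@b) w (u@b)"
  by (induction rule: steps.induct) (auto intro: steps.intros step_app)

lemma steps_trans: "steps R s w u \<Longrightarrow> steps R u v x \<Longrightarrow> steps R s (w@v) x"
  by (induction rule: steps.induct) (auto intro: steps.intros)

lemma normed_all: "normed R \<Longrightarrow> \<exists>w. steps R x w []"
proof (induction x)
  case Nil then show ?case by (auto intro: steps.intros)
next
  case (Cons A x)
  obtain w where "steps R [A] w []" using Cons.prems unfolding normed_def by blast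
  then have "steps R (A#x) w x" using steps_append[of "[A]" w "[]" x] by simp
  then show ?case using Cons steps_trans by blast
qed

inductive cpath :: "'v list \<Rightarrow> nat \<Rightarrow> 'v list \<Rightarrow> bool" where
  cp_refl: "cpath s 0 s"
| cp_step: "step R s a t \<Longrightarrow> cpath t n u \<Longrightarrow> cpath s (if bbisim R tau s t then n else Suc n) u"

lemma cpath_trans: "cpath s n u \<Longrightarrow> cpath u m v \<Longrightarrow> cpath s (n+m) v"
proof (induction rule: cpath.induct)
  case (cp_refl s) then show ?case by simp
next
  case (cp_step s a t n u)
  have "cpath s (if bbisim R tau s t then n+m else Suc (n+m)) v"
    using cpath.cp_step[OF cp_step.hyps(1) cp_step.IH[OF cp_step.prems]] .
  then show ?case by (cases "bbisim R tau s t") auto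
qed

lemma steps_cpath: "steps R s w u \<Longrightarrow> \<exists>n. cpath s n u"
  by (induction rule: steps.induct) (auto intro: cpath.intros)

lemma cpath0_bbisim: "cpath s n u \<Longrightarrow> n = 0 \<Longrightarrow> bbisim R tau s u"
proof (induction rule: cpath.induct)
  case (cp_refl s) show ?case by (rule bbisim_refl)
next
  case (cp_step s a t n u)
  then show ?case by (cases "bbisim R tau s t") (auto intro: bbisim_trans)
qed

lemma tauseq_cpath: "tauseq (bbisim R tau s) t t1 \<Longrightarrow> bbisim R tau s t \<Longrightarrow> cpath t 0 t1"
proof (induction rule: tauseq.induct)
  case (ts_refl t) show ?case by (rule cp_refl)
next
  case (ts_step t t2 u)
  have "bbisim R tau t t2" using ts_step bbisim_sym bbisim_trans by blast
  then show ?case using cpath.cp_step[OF ts_step.hyps(1) ts_step.IH[OF ts_step.hyps(2)]] by simp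
qed

lemma tauseq_Nil: "tauseq P t u \<Longrightarrow> t = [] \<Longrightarrow> u = []"
  by (induction rule: tauseq.induct) auto

lemma bbisim_nil_cpath: "steps R t w u \<Longrightarrow> u = [] \<Longrightarrow> bbisim R tau t [] \<Longrightarrow> cpath t 0 []"
proof (induction rule: steps.induct)
  case (steps_nil s) then show ?case by (auto intro: cpath.cp_refl)
next
  case (steps_cons s a t w u)
  have "btr (bbisim R tau) s []" using bbisim_btr[OF steps_cons.prems(2)] by blast
  then have "(a = tau \<and> bbisim R tau t []) \<or> (\<exists>t1 t'. tauseq (bbisim R tau s) [] t1 \<and> step R t1 a t')"
    using steps_cons.hyps(1) unfolding btr_def by blast
  moreover have "\<not> (\<exists>t1 t'. tauseq (bbisim R tau s) [] t1 \<and> step R t1 a t')"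
    using tauseq_Nil by fastforce
  ultimately have tn: "bbisim R tau t []" by blast
  have "bbisim R tau s t" using tn steps_cons.prems(2) bbisim_sym bbisim_trans by blast
  then show ?case using cpath.cp_step[OF steps_cons.hyps(1) steps_cons.IH[OF steps_cons.prems(1) tn]] by simp
qed

lemma transfer_cpath: "cpath s n u \<Longrightarrow> bbisim R tau s t \<Longrightarrow> \<exists>t'. cpath t n t' \<and> bbisim R tau u t'"
proof (induction arbitrary: t rule: cpath.induct)
  case (cp_refl s) then show ?case using cpath.cp_refl by blast
next
  case (cp_step s a s1 n u)
  have "btr (bbisim R tau) s t" using bbisim_btr[OF cp_step.prems] by blast
  then have "(a = tau \<and> bbisim R tau s1 t) \<or> (\<exists>t1 t2. tauseq (bbisim R tau s) t t1 \<and> step R t1 a t2 \<and> bbisim R tau s1 t2)"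
    using cp_step.hyps(1) unfolding btr_def by blast
  then show ?case
  proof
    assume A: "a = tau \<and> bbisim R tau s1 t"
    then have "bbisim R tau s s1" using cp_step.prems bbisim_sym bbisim_trans by blast
    then show ?case using cp_step.IH A by simp
  next
    assume "\<exists>t1 t2. tauseq (bbisim R tau s) t t1 \<and> step R t1 a t2 \<and> bbisim R tau s1 t2"
    then obtain t1 t2 where h: "tauseq (bbisim R tau s) t t1" "step R t1 a t2" "bbisim R tau s1 t2" by blast
    have c0: "cpath t 0 t1" using tauseq_cpath[OF h(1) cp_step.prems] .
    have st1: "bbisim R tau s t1" using tauseq_last[OF h(1)] cp_step.prems by blast
    have eq: "bbisim R tau t1 t2 \<longleftrightarrow> bbisim R tau s s1"
      using st1 h(3) bbisim_sym bbisim_trans by meson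
    obtain t' where t': "cpath t2 n t'" "bbisim R tau u t'" using cp_step.IH[OF h(3)] by blast
    have "cpath t1 (if bbisim R tau t1 t2 then n else Suc n) t'" by (rule cpath.cp_step[OF h(2) t'(1)])
    then have "cpath t (0 + (if bbisim R tau s s1 then n else Suc n)) t'" using cpath_trans[OF c0] eq by simp
    then show ?case using t'(2) by auto
  qed
qed

definition dn where "dn s = (LEAST n. cpath s n [])"

lemma dn_le: "normed R \<Longrightarrow> bbisim R tau s t \<Longrightarrow> dn t \<le> dn s"
proof -
  assume nr: "normed R" and st: "bbisim R tau s t"
  have "\<exists>n. cpath s n []" using normed_all[OF nr] steps_cpath by blast
  then have "cpath s (dn s) []" unfolding dn_def by (rule LeastI_ex)
  then obtain t' where t': "cpath t (dn s) t'" "bbisim R tau [] t'" using transfer_cpath st by blast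
  obtain w where "steps R t' w []" using normed_all[OF nr] by blast
  then have "cpath t' 0 []" using bbisim_nil_cpath t'(2) bbisim_sym by blast
  then have "cpath t (dn s + 0) []" using cpath_trans[OF t'(1)] by blast
  then show ?thesis unfolding dn_def by (simp add: Least_le)
qed

lemma cpath_split: "cpath x n v \<Longrightarrow> v = [] \<Longrightarrow> x = e@z \<Longrightarrow> \<exists>n1 n2. n = n1+n2 \<and> cpath x n1 z \<and> cpath z n2 []"
proof (induction arbitrary: e rule: cpath.induct)
  case (cp_refl s) then show ?case by (auto intro: cpath.cp_refl)
next
  case (cp_step x a t n v)
  show ?case
  proof (cases e)
    case Nil
    have c: "cpath x (if bbisim R tau x t then n else Suc n) []" using cpath.cp_step[OF cp_step.hyps] cp_step.prems(1) by simp
    have xz: "x = z" using Nil cp_step.prems(2) by simp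
    show ?thesis using c xz cpath.cp_refl[of z] by (intro exI[of _ 0] exI[of _ "if bbisim R tau x t then n else Suc n"]) simp
  next
    case (Cons A e')
    then obtain al where al: "t = (al@e')@z" using cp_step.hyps(1) cp_step.prems(2) by (auto simp: step_Cons)
    obtain n1 n2 where h: "n = n1+n2" "cpath t n1 z" "cpath z n2 []" using cp_step.IH[OF cp_step.prems(1) al] by blast
    have "cpath x (if bbisim R tau x t then n1 else Suc n1) z" by (rule cpath.cp_step[OF cp_step.hyps(1) h(2)])
    then show ?thesis using h by (intro exI[of _ "if bbisim R tau x t then n1 else Suc n1"] exI[of _ n2]) auto
  qed
qed

lemma suffix_absorb: "normed R \<Longrightarrow> bbisim R tau (al@g) g \<Longrightarrow> al = e@z \<Longrightarrow> bbisim R tau (z@g) g"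
proof -
  assume nr: "normed R" and b: "bbisim R tau (al@g) g" and al: "al = e@z"
  have le: "dn (al@g) \<le> dn g" using dn_le[OF nr bbisim_sym[OF b]] .
  have "\<exists>n. cpath (al@g) n []" using normed_all[OF nr] steps_cpath by blast
  then have c: "cpath (al@g) (dn (al@g)) []" unfolding dn_def by (rule LeastI_ex)
  obtain n1 n2 where h1: "dn (al@g) = n1+n2" "cpath (z@g) n2 []"
    using cpath_split[OF c, of e "z@g"] al by auto
  obtain m1 m2 where h2: "n2 = m1+m2" "cpath (z@g) m1 g" "cpath g m2 []"
    using cpath_split[OF h1(2), of z g] by auto
  have "dn g \<le> m2" unfolding dn_def using h2(3) by (rule Least_le)
  then have "m1 = 0" using le h1 h2 by simp
  then show ?thesis using cpath0_bbisim h2(2) by blast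
qed

end

theorem proposition4p6:
  fixes R :: "('v::finite \<times> 'a::finite \<times> 'v list) set"
    and tau :: 'a
    and alpha gamma :: "'v list"
  assumes "finite R"
    and "normed R"
  shows "bbisim R tau (alpha @ gamma) gamma \<longleftrightarrow> set alpha \<subseteq> R_gamma R tau gamma"
proof
  assume b: "bbisim R tau (alpha @ gamma) gamma"
  show "set alpha \<subseteq> R_gamma R tau gamma"
  proof
    fix X assume "X \<in> set alpha"
    then obtain e z where ez: "alpha = e @ X # z" by (meson split_list)
    have 1: "bbisim R tau ((X#z)@gamma) gamma" using suffix_absorb[OF assms(2) b, of e] ez by simp
    have 2: "bbisim R tau (z@gamma) gamma" using suffix_absorb[OF assms(2) b, of "e@[X]"] ez by simp
    have "bbisim R tau ([X]@(z@gamma)) ([X]@gamma)" by (rule bbisim_prefix[OF 2])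
    then have "bbisim R tau (X#gamma) gamma" using 1 bbisim_sym bbisim_trans by fastforce
    then show "X \<in> R_gamma R tau gamma" unfolding R_gamma_def by simp
  qed
next
  assume s: "set alpha \<subseteq> R_gamma R tau gamma"
  then show "bbisim R tau (alpha @ gamma) gamma"
  proof (induction alpha)
    case Nil then show ?case by (simp add: bbisim_refl)
  next
    case (Cons X al)
    have ih: "bbisim R tau (al@gamma) gamma" using Cons by simp
    have x: "bbisim R tau (X#gamma) gamma" using Cons.prems unfolding R_gamma_def by simp
    have "bbisim R tau ([X]@(al@gamma)) ([X]@gamma)" by (rule bbisim_prefix[OF ih])
    then show ?case using x bbisim_trans by fastforce
  qed
qed

end
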